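(* (i) Let $f\colon M^{12}\to\mathbb{S}^{13}$ be the minimal Cartan isoparametric hypersurface with $g=3$ distinct principal curvatures, each of multiplicity $4$. Then $f$ satisfies, for every unit tangent vector $X$, $\mathrm{Ric}_M(X)\geq b(12,k,H)$ only for integers $2\leq k\leq 3$; for $k=3$ the inequality holds with equality (attained for some unit vectors), $\lambda(12,3,0)=\sqrt3$ is a principal curvature of multiplicity $4$, and the second fundamental form has the following structure: at every point there is a Dupin principal normal $\eta$ of multiplicity $4$ with $\|\eta\|=\lambda(12,3,0)$ and $\mathrm{Ric}_M(X)=b(12,3,0)$ for every unit $X\in E_\eta$. (ii) Let $f\colon M^{24}\to\mathbb{S}^{25}$ be the minimal Cartan isoparametric hypersurface with $g=3$ distinct principal curvatures, each of multiplicity $8$. Then $f$ satisfies $\mathrm{Ric}_M\geq b(24,k,H)$ only for integers $2\leq k\leq 6$; for $k=6$ with equality, $\lambda(24,6,0)=\sqrt3$ is a principal curvature of multiplicity $8$, and at every point there is a Dupin principal normal $\eta$ of multiplicity $8$ with $\|\eta\|=\lambda(24,6,0)$ and $\mathrm{Ric}_M(X)=b(24,6,0)$ for every unit $X\in E_\eta$.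
   Context: An isoparametric hypersurface of the unit sphere with $g=3$ (Cartan hypersurface) has principal curvatures $\cot\theta,\ \cot(\theta+\pi/3),\ \cot(\theta+2\pi/3)$ for some $\theta\in(0,\pi/2)$, all with the same multiplicity; the minimal one in the family has principal curvatures $\sqrt3,0,-\sqrt3$. Notation: $b(n,k,H)=\frac{n(k-1)}{k}+\frac{n(k-1)H}{2k^2}\big(nH+\sqrt{n^2H^2+4k(n-k)}\big)$, $\lambda(n,k,H)=\frac{1}{2k}\big(nH+\sqrt{n^2H^2+4k(n-k)}\big)$, $H$ the length of the normalized mean curvature vector, $\mathrm{Ric}_M(X)$ the non-normalized Ricci curvature in the unit direction $X$. A Dupin principal normal $\eta$ at $x$ is a normal vector for which $E_\eta(x)=\{X:\alpha_f(X,Y)=\langle X,Y\rangle\eta\ \forall Y\}$ has dimension $\geq 2$ (its multiplicity), $\alpha_f$ the second fundamental form; for a hypersurface this means $\eta=\rho\xi$ with $\rho$ a principal curvature of multiplicity $\geq2$ w.r.t. the unit normal $\xi$. *)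

theory Defs
  imports "HOL-Analysis.Analysis"
begin

text \<open>Pointwise model of a hypersurface f: M^n -> S^(n+1) (unit sphere).
  Tangent space at a point: real^'n with orthonormal basis axis i 1.
  Normal space: spanned by the unit normal xi; a normal vector rho*xi is encoded by rho.
  The second fundamental form is alpha(X,Y) = <A X, Y> xi, A the shape operator.\<close>

definition bnd :: "nat \<Rightarrow> nat \<Rightarrow> real \<Rightarrow> real" where
  "bnd n k H = real n * (real k - 1) / real k
     + real n * (real k - 1) * H / (2 * (real k)\<^sup>2)
       * (real n * H + sqrt ((real n)\<^sup>2 * H\<^sup>2 + 4 * real k * (real n - real k)))"

definition lam :: "nat \<Rightarrow> nat \<Rightarrow> real \<Rightarrow> real" where
  "lam n k H = (real n * H + sqrt ((real n)\<^sup>2 * H\<^sup>2 + 4 * real k * (real n - real k)))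
                / (2 * real k)"

definition shape_operator :: "(real^'n \<Rightarrow> real^'n) \<Rightarrow> bool" where
  "shape_operator A \<longleftrightarrow> linear A \<and> (\<forall>X Y. A X \<bullet> Y = X \<bullet> A Y)"

definition sff :: "(real^'n \<Rightarrow> real^'n) \<Rightarrow> real^'n \<Rightarrow> real^'n \<Rightarrow> real" where
  "sff A X Y = A X \<bullet> Y"

definition mean_curv :: "(real^'n \<Rightarrow> real^'n) \<Rightarrow> real" where
  "mean_curv A = \<bar>(\<Sum>i\<in>UNIV. sff A (axis i 1) (axis i 1)) / real CARD('n)\<bar>"

text \<open>Curvature <R(X,Y)Y,X> of the induced metric, by the Gauss equation
  for a hypersurface of the unit sphere\<close>
definition gauss_curv :: "(real^'n \<Rightarrow> real^'n) \<Rightarrow> real^'n \<Rightarrow> real^'n \<Rightarrow> real" where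
  "gauss_curv A X Y = (X \<bullet> X) * (Y \<bullet> Y) - (X \<bullet> Y)\<^sup>2
      + sff A X X * sff A Y Y - (sff A X Y)\<^sup>2"

definition ricci :: "(real^'n \<Rightarrow> real^'n) \<Rightarrow> real^'n \<Rightarrow> real" where
  "ricci A X = (\<Sum>i\<in>UNIV. gauss_curv A X (axis i 1))"

definition E_normal :: "(real^'n \<Rightarrow> real^'n) \<Rightarrow> real \<Rightarrow> (real^'n) set" where
  "E_normal A \<rho> = {X. \<forall>Y. sff A X Y = (X \<bullet> Y) * \<rho>}"

definition dupin_principal_normal :: "(real^'n \<Rightarrow> real^'n) \<Rightarrow> real \<Rightarrow> bool" where
  "dupin_principal_normal A \<rho> \<longleftrightarrow> dim (E_normal A \<rho>) \<ge> 2"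

definition pc_mult :: "(real^'n \<Rightarrow> real^'n) \<Rightarrow> real \<Rightarrow> nat" where
  "pc_mult A \<rho> = dim {X. A X = \<rho> *\<^sub>R X}"

definition minimal_cartan_sff :: "nat \<Rightarrow> (real^'n \<Rightarrow> real^'n) \<Rightarrow> bool" where
  "minimal_cartan_sff m A \<longleftrightarrow> shape_operator A \<and> CARD('n) = 3 * m \<and>
     pc_mult A (sqrt 3) = m \<and> pc_mult A 0 = m \<and> pc_mult A (- sqrt 3) = m"

end

theory Submission
  imports Defs
begin

lemma onb_expand:
  fixes B :: "'a::euclidean_space set"
  assumes fin: "finite B" and po: "pairwise orthogonal B" and n1: "\<forall>u\<in>B. norm u = 1"
    and sp: "span B = UNIV"
  shows "x = (\<Sum>u\<in>B. (x \<bullet> u) *\<^sub>R u)"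
proof -
  have "x \<in> span B" using sp by auto
  then obtain c where c: "x = (\<Sum>v\<in>B. c v *\<^sub>R v)" using span_finite[OF fin] by auto
  have "x \<bullet> w = c w" if w: "w \<in> B" for w
  proof -
    have "x \<bullet> w = (\<Sum>v\<in>B. c v * (v \<bullet> w))" by (simp add: c inner_sum_left)
    also have "\<dots> = (\<Sum>v\<in>B. if v = w then c v else 0)"
    proof (rule sum.cong[OF refl])
      fix v assume v: "v \<in> B"
      show "c v * (v \<bullet> w) = (if v = w then c v else 0)"
      proof (cases "v = w")
        case True
        then have "v \<bullet> v = 1" using n1 v by (simp add: norm_eq_1)
        then show ?thesis using True by simp
      next
        case False
        then have "v \<bullet> w = 0" using po v w by (auto simp: pairwise_def orthogonal_def)
        then show ?thesis using False by simp
      qed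
    qed
    also have "\<dots> = c w" using w fin by (simp add: sum.delta)
    finally show ?thesis .
  qed
  then show ?thesis by (subst c) (auto intro!: sum.cong)
qed

lemma onb_parseval:
  fixes B :: "'a::euclidean_space set"
  assumes "finite B" and "pairwise orthogonal B" and "\<forall>u\<in>B. norm u = 1"
    and "span B = UNIV"
  shows "x \<bullet> y = (\<Sum>u\<in>B. (x \<bullet> u) * (y \<bullet> u))"
proof -
  have "x \<bullet> y = (\<Sum>u\<in>B. (x \<bullet> u) *\<^sub>R u) \<bullet> y" using onb_expand[OF assms] by metis
  also have "\<dots> = (\<Sum>u\<in>B. (x \<bullet> u) * (y \<bullet> u))" by (simp add: inner_sum_left) (rule sum.cong, auto simp: inner_commute)
  finally show ?thesis .
qed

lemma std_parseval:
  fixes x y :: "real^'n"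
  shows "x \<bullet> y = (\<Sum>i\<in>UNIV. (x \<bullet> axis i 1) * (y \<bullet> axis i 1))"
  unfolding inner_axis by (simp add: inner_vec_def)

lemma eig_subspace:
  assumes "linear A" shows "subspace {X. A X = c *\<^sub>R X}"
  using assms unfolding subspace_def
  by (auto simp: linear_add linear_scale linear_0 algebra_simps)

lemma eig_orth:
  assumes "\<forall>X Y. A X \<bullet> Y = X \<bullet> A Y" "A u = a *\<^sub>R u" "A v = b *\<^sub>R v" "a \<noteq> b"
  shows "u \<bullet> v = 0"
proof -
  have "a * (u \<bullet> v) = b * (u \<bullet> v)" using assms(1)[rule_format, of u v] assms(2,3) by simp
  then show ?thesis using assms(4) by simp
qed

lemma cartan_facts:
  fixes A :: "real^'n \<Rightarrow> real^'n"
  assumes mc: "minimal_cartan_sff m A" and m1: "m \<ge> 1"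
  shows "mean_curv A = 0"
    and "\<And>X. ricci A X = real CARD('n) * (X \<bullet> X) - X \<bullet> X - A X \<bullet> A X"
    and "\<And>X. A X \<bullet> A X \<le> 3 * (X \<bullet> X)"
    and "\<exists>X. norm X = 1 \<and> A X = sqrt 3 *\<^sub>R X"
proof -
  have lin: "linear A" and sa: "\<forall>X Y. A X \<bullet> Y = X \<bullet> A Y" and cn: "CARD('n) = 3 * m"
    and d1: "dim {X. A X = sqrt 3 *\<^sub>R X} = m" and d2: "dim {X. A X = 0 *\<^sub>R X} = m"
    and d3: "dim {X. A X = (- sqrt 3) *\<^sub>R X} = m"
    using mc unfolding minimal_cartan_sff_def shape_operator_def pc_mult_def by auto
  obtain B1 where B1: "B1 \<subseteq> {X. A X = sqrt 3 *\<^sub>R X}" "pairwise orthogonal B1"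
      "\<And>x. x \<in> B1 \<Longrightarrow> norm x = 1" "independent B1" "card B1 = m"
    using orthonormal_basis_subspace[OF eig_subspace[OF lin, of "sqrt 3"]] d1 by metis
  obtain B2 where B2: "B2 \<subseteq> {X. A X = 0 *\<^sub>R X}" "pairwise orthogonal B2"
      "\<And>x. x \<in> B2 \<Longrightarrow> norm x = 1" "independent B2" "card B2 = m"
    using orthonormal_basis_subspace[OF eig_subspace[OF lin, of "0"]] d2 by metis
  obtain B3 where B3: "B3 \<subseteq> {X. A X = (- sqrt 3) *\<^sub>R X}" "pairwise orthogonal B3"
      "\<And>x. x \<in> B3 \<Longrightarrow> norm x = 1" "independent B3" "card B3 = m"
    using orthonormal_basis_subspace[OF eig_subspace[OF lin, of "- sqrt 3"]] d3 by metis
  have f1: "finite B1" and f2: "finite B2" and f3: "finite B3"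
    using B1(4) B2(4) B3(4) independent_imp_finite by auto
  have s3: "sqrt 3 \<noteq> (0::real)" "sqrt 3 \<noteq> - sqrt (3::real)" "(0::real) \<noteq> - sqrt 3" by auto
  have o12: "u \<bullet> v = 0" if "u \<in> B1" "v \<in> B2" for u v
    using eig_orth[OF sa, of u "sqrt 3" v 0] that B1(1) B2(1) s3 by auto
  have o13: "u \<bullet> v = 0" if "u \<in> B1" "v \<in> B3" for u v
    using eig_orth[OF sa, of u "sqrt 3" v "- sqrt 3"] that B1(1) B3(1) s3 by auto
  have o23: "u \<bullet> v = 0" if "u \<in> B2" "v \<in> B3" for u v
    using eig_orth[OF sa, of u 0 v "- sqrt 3"] that B2(1) B3(1) s3 by auto
  have nz: "u \<bullet> u = 1" if "u \<in> B1 \<union> B2 \<union> B3" for u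
    using that B1(3) B2(3) B3(3) by (auto simp: norm_eq_1)
  have dj12: "B1 \<inter> B2 = {}" using o12 nz by fastforce
  have dj3: "(B1 \<union> B2) \<inter> B3 = {}" using o13 o23 nz by fastforce
  define B where "B = B1 \<union> B2 \<union> B3"
  have fB: "finite B" using f1 f2 f3 B_def by auto
  have cB: "card B = 3 * m" unfolding B_def
    using card_Un_disjoint[OF _ f3 dj3] card_Un_disjoint[OF f1 f2 dj12] f1 f2 B1(5) B2(5) B3(5) by simp
  have poB: "pairwise orthogonal B" unfolding B_def pairwise_def orthogonal_def
    using B1(2) B2(2) B3(2) o12 o13 o23 unfolding pairwise_def orthogonal_def
    by (auto, metis inner_commute, metis inner_commute, metis inner_commute)
  have n1B: "\<forall>u\<in>B. norm u = 1" using B1(3) B2(3) B3(3) B_def by auto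
  have "0 \<notin> B" using n1B by auto
  then have indB: "independent B" using pairwise_orthogonal_independent[OF poB] by auto
  have "card B = dim (UNIV :: (real^'n) set)" using cB cn by simp
  then have spB: "span B = UNIV" using card_eq_dim[of B UNIV] fB indB by auto
  define lam where "lam u = (if u \<in> B1 then sqrt 3 else if u \<in> B2 then 0 else - sqrt 3)" for u
  have Au: "A u = lam u *\<^sub>R u" if "u \<in> B" for u
    using that B1(1) B2(1) B3(1) unfolding B_def lam_def by auto
  have l3: "(lam u)\<^sup>2 \<le> 3" for u by (simp add: lam_def)
  note par = onb_parseval[OF fB poB n1B spB]
  have tr: "(\<Sum>i\<in>UNIV. A (axis i 1) \<bullet> axis i 1) = 0"
  proof -
    have "(\<Sum>i\<in>UNIV. A (axis i 1) \<bullet> axis i 1)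
        = (\<Sum>i\<in>UNIV. \<Sum>u\<in>B. (A (axis i 1) \<bullet> u) * (axis i 1 \<bullet> u))"
      by (subst par) simp
    also have "\<dots> = (\<Sum>u\<in>B. \<Sum>i\<in>UNIV. (A u \<bullet> axis i 1) * (u \<bullet> axis i 1))"
      by (subst sum.swap) (simp add: sa inner_commute)
    also have "\<dots> = (\<Sum>u\<in>B. A u \<bullet> u)" by (simp add: std_parseval[symmetric])
    also have "\<dots> = (\<Sum>u\<in>B. lam u)" by (rule sum.cong) (auto simp: Au nz B_def)
    also have "\<dots> = (\<Sum>u\<in>B1. lam u) + (\<Sum>u\<in>B2. lam u) + (\<Sum>u\<in>B3. lam u)"
      unfolding B_def using f1 f2
      by (simp add: sum.union_disjoint[OF _ f3 dj3, of lam] sum.union_disjoint[OF f1 f2 dj12, of lam])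
    also have "\<dots> = real m * sqrt 3 + 0 + real m * (- sqrt 3)"
    proof -
      have "(\<Sum>u\<in>B1. lam u) = (\<Sum>u\<in>B1. sqrt 3)" by (rule sum.cong) (auto simp: lam_def)
      moreover have "(\<Sum>u\<in>B2. lam u) = (\<Sum>u\<in>B2. 0)" using dj12 by (intro sum.cong) (auto simp: lam_def)
      moreover have "(\<Sum>u\<in>B3. lam u) = (\<Sum>u\<in>B3. - sqrt 3)" using dj3 by (intro sum.cong) (auto simp: lam_def)
      ultimately show ?thesis using B1(5) B2(5) B3(5) by simp
    qed
    finally show ?thesis by simp
  qed
  show "mean_curv A = 0" unfolding mean_curv_def sff_def using tr by simp
  show ric: "ricci A X = real CARD('n) * (X \<bullet> X) - X \<bullet> X - A X \<bullet> A X" for X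
  proof -
    have "ricci A X = (\<Sum>i\<in>UNIV. (X \<bullet> X) - (X \<bullet> axis i 1)\<^sup>2
        + (A X \<bullet> X) * (A (axis i 1) \<bullet> axis i 1) - (A X \<bullet> axis i 1)\<^sup>2)"
      unfolding ricci_def gauss_curv_def sff_def by (simp add: inner_axis_axis)
    also have "\<dots> = real CARD('n) * (X \<bullet> X) - (\<Sum>i\<in>UNIV. (X \<bullet> axis i 1)\<^sup>2)
        + (A X \<bullet> X) * (\<Sum>i\<in>UNIV. A (axis i 1) \<bullet> axis i 1) - (\<Sum>i\<in>UNIV. (A X \<bullet> axis i 1)\<^sup>2)"
      by (simp add: sum.distrib sum_subtractf sum_distrib_left)
    also have "\<dots> = real CARD('n) * (X \<bullet> X) - X \<bullet> X - A X \<bullet> A X"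
      using tr std_parseval[of X X] std_parseval[of "A X" "A X"] by (simp add: power2_eq_square)
    finally show ?thesis .
  qed
  show "A X \<bullet> A X \<le> 3 * (X \<bullet> X)" for X
  proof -
    have "A X \<bullet> A X = (\<Sum>u\<in>B. (A X \<bullet> u) * (A X \<bullet> u))" by (rule par)
    also have "\<dots> = (\<Sum>u\<in>B. (lam u)\<^sup>2 * ((X \<bullet> u) * (X \<bullet> u)))"
      by (rule sum.cong) (auto simp: sa Au power2_eq_square)
    also have "\<dots> \<le> (\<Sum>u\<in>B. 3 * ((X \<bullet> u) * (X \<bullet> u)))"
      by (rule sum_mono) (rule mult_right_mono[OF l3], simp)
    also have "\<dots> = 3 * (X \<bullet> X)" by (simp add: par[of X X] sum_distrib_left)
    finally show ?thesis .
  qed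
  have "B1 \<noteq> {}" using B1(5) m1 by auto
  then obtain u where "u \<in> B1" by auto
  then show "\<exists>X. norm X = 1 \<and> A X = sqrt 3 *\<^sub>R X" using B1(1,3) by auto
qed

lemma E_normal_eig: "E_normal A r = {X. A X = r *\<^sub>R X}"
proof -
  have "(\<forall>Y. A X \<bullet> Y = (X \<bullet> Y) * r) \<longleftrightarrow> A X = r *\<^sub>R X" for X
  proof
    assume h: "\<forall>Y. A X \<bullet> Y = (X \<bullet> Y) * r"
    have "(A X - r *\<^sub>R X) \<bullet> (A X - r *\<^sub>R X) = 0"
      using h[rule_format, of "A X - r *\<^sub>R X"] by (simp add: inner_diff_left)
    then show "A X = r *\<^sub>R X" by simp
  qed simp
  then show ?thesis unfolding E_normal_def sff_def by auto
qed

lemma bnd0: "k > 0 \<Longrightarrow> bnd n k 0 = real n * (real k - 1) / real k"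
  by (simp add: bnd_def)

lemma part:
  fixes M :: "'p set" and S :: "'p \<Rightarrow> real^'a \<Rightarrow> real^'a"
  assumes Mne: "M \<noteq> {}" and cn: "CARD('a) = n" and mc: "\<forall>x\<in>M. minimal_cartan_sff m (S x)"
    and m2: "m \<ge> 2"
    and hk: "\<forall>k::nat. 2 \<le> k \<longrightarrow> (bnd n k 0 \<le> real n - 4 \<longleftrightarrow> k \<le> k0)"
    and hb: "bnd n k0 0 = real n - 4" and hl: "lam n k0 0 = sqrt 3"
  shows
   "((\<forall>k::nat. 2 \<le> k \<longrightarrow>
        ((\<forall>x\<in>M. \<forall>X. norm X = 1 \<longrightarrow> ricci (S x) X \<ge> bnd n k (mean_curv (S x)))
          \<longleftrightarrow> k \<le> k0))
     \<and> (\<forall>x\<in>M. \<exists>X. norm X = 1 \<and> ricci (S x) X = bnd n k0 (mean_curv (S x)))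
     \<and> lam n k0 0 = sqrt 3
     \<and> (\<forall>x\<in>M. pc_mult (S x) (lam n k0 0) = m)
     \<and> (\<forall>x\<in>M. \<exists>\<rho>. dupin_principal_normal (S x) \<rho> \<and> dim (E_normal (S x) \<rho>) = m
            \<and> \<bar>\<rho>\<bar> = lam n k0 0
            \<and> (\<forall>X\<in>E_normal (S x) \<rho>. norm X = 1 \<longrightarrow> ricci (S x) X = bnd n k0 0)))"
proof -
  have m1: "m \<ge> 1" using m2 by simp
  have H0: "mean_curv (S x) = 0" if "x \<in> M" for x using cartan_facts(1)[OF mc[rule_format, OF that] m1] .
  have ric: "ricci (S x) X = real n - 1 - S x X \<bullet> S x X" if "x \<in> M" "norm X = 1" for x X
    using cartan_facts(2)[OF mc[rule_format, OF that(1)] m1, of X] that(2) cn by (simp add: norm_eq_1)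
  have lb: "ricci (S x) X \<ge> real n - 4" if "x \<in> M" "norm X = 1" for x X
    using ric[OF that] cartan_facts(3)[OF mc[rule_format, OF that(1)] m1, of X] that(2) by (simp add: norm_eq_1)
  have eqv: "ricci (S x) X = real n - 4" if "x \<in> M" "norm X = 1" "S x X = sqrt 3 *\<^sub>R X" for x X
    using ric[OF that(1,2)] that(2,3) by (simp add: norm_eq_1)
  have ex: "\<exists>X. norm X = 1 \<and> S x X = sqrt 3 *\<^sub>R X" if "x \<in> M" for x
    using cartan_facts(4)[OF mc[rule_format, OF that] m1] .
  obtain x0 where x0: "x0 \<in> M" using Mne by auto
  have A: "(\<forall>x\<in>M. \<forall>X. norm X = 1 \<longrightarrow> ricci (S x) X \<ge> bnd n k (mean_curv (S x)))
          \<longleftrightarrow> k \<le> k0" if k2: "2 \<le> k" for k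
  proof
    assume h: "\<forall>x\<in>M. \<forall>X. norm X = 1 \<longrightarrow> ricci (S x) X \<ge> bnd n k (mean_curv (S x))"
    obtain X where X: "norm X = 1" "S x0 X = sqrt 3 *\<^sub>R X" using ex[OF x0] by auto
    have "bnd n k 0 \<le> real n - 4" using h x0 X eqv[OF x0 X] H0[OF x0] by force
    then show "k \<le> k0" using hk k2 by auto
  next
    assume "k \<le> k0"
    then have "bnd n k 0 \<le> real n - 4" using hk k2 by auto
    then show "\<forall>x\<in>M. \<forall>X. norm X = 1 \<longrightarrow> ricci (S x) X \<ge> bnd n k (mean_curv (S x))"
      using lb H0 by force
  qed
  have B: "\<exists>X. norm X = 1 \<and> ricci (S x) X = bnd n k0 (mean_curv (S x))" if "x \<in> M" for x
    using ex[OF that] eqv[OF that] H0[OF that] hb by auto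
  have C: "pc_mult (S x) (lam n k0 0) = m" if "x \<in> M" for x
    using mc that hl unfolding minimal_cartan_sff_def by auto
  have D: "\<exists>\<rho>. dupin_principal_normal (S x) \<rho> \<and> dim (E_normal (S x) \<rho>) = m
            \<and> \<bar>\<rho>\<bar> = lam n k0 0
            \<and> (\<forall>X\<in>E_normal (S x) \<rho>. norm X = 1 \<longrightarrow> ricci (S x) X = bnd n k0 0)" if "x \<in> M" for x
  proof (intro exI[of _ "sqrt 3"] conjI)
    show dm: "dim (E_normal (S x) (sqrt 3)) = m"
      using C[OF that] hl unfolding E_normal_eig pc_mult_def by simp
    then show "dupin_principal_normal (S x) (sqrt 3)" unfolding dupin_principal_normal_def using m2 by simp
    show "\<bar>sqrt 3\<bar> = lam n k0 0" using hl by simp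
    show "\<forall>X\<in>E_normal (S x) (sqrt 3). norm X = 1 \<longrightarrow> ricci (S x) X = bnd n k0 0"
      using eqv[OF that] hb unfolding E_normal_eig by auto
  qed
  show ?thesis using A B C D hl by blast
qed

lemma sq108: "sqrt (108::real) = 6 * sqrt 3"
proof -
  have "sqrt (108::real) = sqrt (36 * 3)" by simp
  also have "\<dots> = 6 * sqrt 3" by (simp only: real_sqrt_mult) simp
  finally show ?thesis .
qed

lemma sq432: "sqrt (432::real) = 12 * sqrt 3"
proof -
  have "sqrt (432::real) = sqrt (144 * 3)" by simp
  also have "\<dots> = 12 * sqrt 3" by (simp only: real_sqrt_mult) simp
  finally show ?thesis .
qed

lemma hk12: "\<forall>k::nat. 2 \<le> k \<longrightarrow> (bnd 12 k 0 \<le> real 12 - 4 \<longleftrightarrow> k \<le> 3)"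
proof (intro allI impI)
  fix k :: nat assume "2 \<le> k"
  then have kp: "real k > 0" "k > 0" by auto
  show "(bnd 12 k 0 \<le> real 12 - 4 \<longleftrightarrow> k \<le> 3)"
    using kp by (simp add: bnd0 divide_le_eq)
qed

lemma hk24: "\<forall>k::nat. 2 \<le> k \<longrightarrow> (bnd 24 k 0 \<le> real 24 - 4 \<longleftrightarrow> k \<le> 6)"
proof (intro allI impI)
  fix k :: nat assume "2 \<le> k"
  then have kp: "real k > 0" "k > 0" by auto
  show "(bnd 24 k 0 \<le> real 24 - 4 \<longleftrightarrow> k \<le> 6)"
    using kp by (simp add: bnd0 divide_le_eq)
qed

lemma hb12: "bnd 12 3 0 = real 12 - 4" by (simp add: bnd_def)
lemma hb24: "bnd 24 6 0 = real 24 - 4" by (simp add: bnd_def)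
lemma hl12: "lam 12 3 0 = sqrt 3" by (simp add: lam_def sq108)
lemma hl24: "lam 24 6 0 = sqrt 3" by (simp add: lam_def sq432)

theorem proposition9:
  fixes M1 :: "'p set" and S1 :: "'p \<Rightarrow> real^'a \<Rightarrow> real^'a"
    and M2 :: "'q set" and S2 :: "'q \<Rightarrow> real^'b \<Rightarrow> real^'b"
  assumes "M1 \<noteq> {}" and "CARD('a) = 12" and "\<forall>x\<in>M1. minimal_cartan_sff 4 (S1 x)"
    and "M2 \<noteq> {}" and "CARD('b) = 24" and "\<forall>x\<in>M2. minimal_cartan_sff 8 (S2 x)"
  shows
   "((\<forall>k::nat. 2 \<le> k \<longrightarrow>
        ((\<forall>x\<in>M1. \<forall>X. norm X = 1 \<longrightarrow> ricci (S1 x) X \<ge> bnd 12 k (mean_curv (S1 x)))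
          \<longleftrightarrow> k \<le> 3))
     \<and> (\<forall>x\<in>M1. \<exists>X. norm X = 1 \<and> ricci (S1 x) X = bnd 12 3 (mean_curv (S1 x)))
     \<and> lam 12 3 0 = sqrt 3
     \<and> (\<forall>x\<in>M1. pc_mult (S1 x) (lam 12 3 0) = 4)
     \<and> (\<forall>x\<in>M1. \<exists>\<rho>. dupin_principal_normal (S1 x) \<rho> \<and> dim (E_normal (S1 x) \<rho>) = 4
            \<and> \<bar>\<rho>\<bar> = lam 12 3 0
            \<and> (\<forall>X\<in>E_normal (S1 x) \<rho>. norm X = 1 \<longrightarrow> ricci (S1 x) X = bnd 12 3 0)))
    \<and>
    ((\<forall>k::nat. 2 \<le> k \<longrightarrow>
        ((\<forall>x\<in>M2. \<forall>X. norm X = 1 \<longrightarrow> ricci (S2 x) X \<ge> bnd 24 k (mean_curv (S2 x)))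
          \<longleftrightarrow> k \<le> 6))
     \<and> (\<forall>x\<in>M2. \<exists>X. norm X = 1 \<and> ricci (S2 x) X = bnd 24 6 (mean_curv (S2 x)))
     \<and> lam 24 6 0 = sqrt 3
     \<and> (\<forall>x\<in>M2. pc_mult (S2 x) (lam 24 6 0) = 8)
     \<and> (\<forall>x\<in>M2. \<exists>\<rho>. dupin_principal_normal (S2 x) \<rho> \<and> dim (E_normal (S2 x) \<rho>) = 8
            \<and> \<bar>\<rho>\<bar> = lam 24 6 0
            \<and> (\<forall>X\<in>E_normal (S2 x) \<rho>. norm X = 1 \<longrightarrow> ricci (S2 x) X = bnd 24 6 0)))"
  apply (rule conjI)
   apply (rule part[OF assms(1,2,3) _ hk12 hb12 hl12], simp)
  apply (rule part[OF assms(4,5,6) _ hk24 hb24 hl24], simp)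
  done

end
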